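(* Let $G=(V,E)$ be a regular graph, identified with its (symmetric) random-walk matrix, let $\lambda\in(0,1)$, $q\ge2$, and let $P_{\ge\lambda}$ be the orthogonal projector onto the span of the eigenvectors of $G$ with eigenvalue at least $\lambda$. Then for every nonempty $S\subseteq V$, $$\Phi(S)\ \ge\ 1-\lambda-\|P_{\ge\lambda}\|_{q/(q-1)\to2}^2\,\mu(S)^{(q-2)/q}.$$
   Context: Functions on $V$ carry the uniform (expectation) measure: $\|f\|_p=(\mathbb{E}_{x\in V}|f(x)|^p)^{1/p}$, $\langle f,g\rangle=\mathbb{E}_xf(x)g(x)$, and $\|A\|_{p\to2}=\max_{\|f\|_p\le1}\|Af\|_2$. $\mu(S)=|S|/|V|$. The expansion $\Phi(S)=\Pr[y\notin S]$, where $x$ is uniform in $S$ and $y$ is a uniformly random neighbor of $x$. *)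

theory Defs
  imports "HOL-Analysis.Analysis"
begin

text \<open>Vertices form the finite type 'n; real functions on V are vectors in real^'n.
  The graph is a symmetric adjacency relation E that is d-regular (d > 0).\<close>

definition regular_graph :: "('n::finite \<Rightarrow> 'n \<Rightarrow> bool) \<Rightarrow> nat \<Rightarrow> bool" where
  "regular_graph E d \<longleftrightarrow> (\<forall>x y. E x y = E y x) \<and> d > 0 \<and> (\<forall>x. card {y. E x y} = d)"

definition rw_matrix :: "('n::finite \<Rightarrow> 'n \<Rightarrow> bool) \<Rightarrow> nat \<Rightarrow> real^'n^'n" where
  "rw_matrix E d = (\<chi> x y. if E x y then 1 / real d else 0)"

definition eig_span_ge :: "real^'n^'n \<Rightarrow> real \<Rightarrow> (real^'n) set" where
  "eig_span_ge A lam = span {f. f \<noteq> 0 \<and> (\<exists>mu. mu \<ge> lam \<and> A *v f = mu *\<^sub>R f)}"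

text \<open>Orthogonal projection onto a subspace W (orthogonality w.r.t. the expectation
  inner product, which is a positive multiple of the standard one).\<close>
definition orth_proj :: "(real^'n::finite) set \<Rightarrow> real^'n \<Rightarrow> real^'n" where
  "orth_proj W f = (THE g. g \<in> W \<and> (\<forall>w\<in>W. inner (f - g) w = 0))"

definition pnorm :: "real \<Rightarrow> real^'n::finite \<Rightarrow> real" where
  "pnorm p f = ((\<Sum>x\<in>UNIV. \<bar>f $ x\<bar> powr p) / real CARD('n)) powr (1 / p)"

definition opnorm_p2 :: "real \<Rightarrow> (real^'n::finite \<Rightarrow> real^'n) \<Rightarrow> real" where
  "opnorm_p2 p T = (SUP f\<in>{f. pnorm p f \<le> 1}. pnorm 2 (T f))"

definition meas :: "'n::finite set \<Rightarrow> real" where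
  "meas S = real (card S) / real CARD('n)"

definition expansion :: "('n::finite \<Rightarrow> 'n \<Rightarrow> bool) \<Rightarrow> nat \<Rightarrow> 'n set \<Rightarrow> real" where
  "expansion E d S = (\<Sum>x\<in>S. real (card {y. E x y \<and> y \<notin> S}) / real d) / real (card S)"

end

theory Submission
  imports Defs
begin

lemma proj_exists:
  fixes W :: "(real^'n::finite) set"
  assumes "subspace W"
  shows "\<exists>g. g \<in> W \<and> (\<forall>w\<in>W. inner (f - g) w = 0)"
proof -
  obtain y z where "y \<in> span W" "\<And>w. w \<in> span W \<Longrightarrow> orthogonal z w" "f = y + z"
    using orthogonal_subspace_decomp_exists[of W f] by blast
  then show ?thesis using assms span_eq_iff[of W]
    by (metis add_diff_cancel_left' orthogonal_def)
qed

lemma proj_unique: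
  fixes W :: "(real^'n::finite) set"
  assumes "subspace W" "g \<in> W" "\<forall>w\<in>W. inner (f - g) w = 0"
  shows "orth_proj W f = g"
  unfolding orth_proj_def
proof (rule the_equality)
  show "g \<in> W \<and> (\<forall>w\<in>W. inner (f - g) w = 0)" using assms by auto
next
  fix g' assume h: "g' \<in> W \<and> (\<forall>w\<in>W. inner (f - g') w = 0)"
  have d: "g - g' \<in> W" using h assms subspace_diff by blast
  have "inner (f - g') (g - g') - inner (f - g) (g - g') = 0" using h assms d by auto
  then have "inner (g - g') (g - g') = 0" by (simp add: inner_diff_left inner_diff_right)
  then show "g' = g" by simp
qed

lemma proj_props:
  fixes W :: "(real^'n::finite) set"
  assumes "subspace W"
  shows "orth_proj W f \<in> W \<and> (\<forall>w\<in>W. inner (f - orth_proj W f) w = 0)"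
proof -
  obtain g where g: "g \<in> W \<and> (\<forall>w\<in>W. inner (f - g) w = 0)" using proj_exists[OF assms] by blast
  then have "orth_proj W f = g" using proj_unique[OF assms] by blast
  then show ?thesis using g by simp
qed

lemma proj_scale:
  fixes W :: "(real^'n::finite) set"
  assumes "subspace W"
  shows "orth_proj W (c *\<^sub>R f) = c *\<^sub>R orth_proj W f"
proof (rule proj_unique[OF assms])
  show "c *\<^sub>R orth_proj W f \<in> W" using proj_props[OF assms] subspace_scale[OF assms] by blast
  show "\<forall>w\<in>W. inner (c *\<^sub>R f - c *\<^sub>R orth_proj W f) w = 0"
    using proj_props[OF assms] by (simp add: scaleR_diff_right[symmetric])
qed

lemma proj_norm:
  fixes W :: "(real^'n::finite) set"
  assumes "subspace W"
  shows "inner (orth_proj W f) (orth_proj W f) \<le> inner f f"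
proof -
  let ?g = "orth_proj W f"
  have o: "inner (f - ?g) ?g = 0" using proj_props[OF assms] by blast
  have "inner f f = inner ?g ?g + inner (f - ?g) (f - ?g) + 2 * inner (f - ?g) ?g"
    by (simp add: inner_diff_left inner_diff_right inner_commute algebra_simps)
  then show ?thesis using o by simp
qed

lemma lagrange_aux:
  fixes a b :: real
  assumes "a \<ge> 0" "b \<ge> 0" "\<forall>t. 0 \<le> 2 * t * a + t^2 * b"
  shows "a = 0"
proof (rule ccontr)
  assume "a \<noteq> 0" then have a: "a > 0" using assms by simp
  define t where "t = - a / (b + 1)"
  have "0 \<le> 2 * t * a + t^2 * b" using assms by blast
  also have "2 * t * a + t^2 * b = a^2 / (b+1) * (b / (b+1) - 2)"
  proof -
    have "b + 1 > 0" using assms by simp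
    then show ?thesis unfolding t_def by (simp add: divide_simps power2_eq_square) (simp add: algebra_simps)
  qed
  also have "\<dots> < 0"
  proof -
    have "b / (b+1) < 1" using assms by simp
    then have "b / (b+1) - 2 < 0" by simp
    moreover have "a^2 / (b+1) > 0" using a assms by simp
    ultimately show ?thesis by (intro mult_pos_neg) auto
  qed
  finally show False by simp
qed

lemma rayleigh:
  fixes A :: "real^'n::finite^'n" and U :: "(real^'n) set"
  assumes sym: "\<And>u v. inner u (A *v v) = inner (A *v u) v"
    and U: "subspace U" and inv: "\<And>u. u \<in> U \<Longrightarrow> A *v u \<in> U"
    and ne: "U \<noteq> {0}"
  shows "\<exists>h m. h \<in> U \<and> h \<noteq> 0 \<and> A *v h = m *\<^sub>R h \<and> (\<forall>u\<in>U. inner u (A *v u) \<le> m * inner u u)"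
proof -
  define K where "K = U \<inter> sphere 0 1"
  have "compact K" unfolding K_def using closed_subspace[OF U]
    by (simp add: closed_Int_compact)
  moreover have "K \<noteq> {}"
  proof -
    obtain u where u: "u \<in> U" "u \<noteq> 0" using ne subspace_0[OF U] by blast
    then have "(1 / norm u) *\<^sub>R u \<in> K" unfolding K_def using subspace_scale[OF U] by auto
    then show ?thesis by blast
  qed
  moreover have "continuous_on K (\<lambda>h. inner h (A *v h))"
    by (intro continuous_intros matrix_vector_mult_linear_continuous_on)
  ultimately obtain h where h: "h \<in> K" and hmax: "\<forall>y\<in>K. inner y (A *v y) \<le> inner h (A *v h)"
    using continuous_attains_sup by blast
  define m where "m = inner h (A *v h)"
  have hU: "h \<in> U" and hn: "norm h = 1" using h unfolding K_def by auto
  have bound: "inner u (A *v u) \<le> m * inner u u" if uU: "u \<in> U" for u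
  proof (cases "u = 0")
    case True then show ?thesis by simp
  next
    case False
    define c where "c = 1 / norm u"
    have "c *\<^sub>R u \<in> K" unfolding K_def c_def using subspace_scale[OF U] uU False by auto
    then have "inner (c *\<^sub>R u) (A *v (c *\<^sub>R u)) \<le> m" using hmax m_def by blast
    then have "c^2 * inner u (A *v u) \<le> m" by (simp add: matrix_vector_mult_scaleR power2_eq_square)
    then have "inner u (A *v u) \<le> m * (norm u)^2" using False unfolding c_def
      by (simp add: field_simps power2_eq_square)
    then show ?thesis by (simp add: power2_norm_eq_inner)
  qed
  define v where "v = m *\<^sub>R h - A *v h"
  have vU: "v \<in> U" unfolding v_def using hU inv U subspace_diff subspace_scale by blast
  have hh: "inner h h = 1" using hn by (simp add: norm_eq_1)
  have Q: "\<forall>t. 0 \<le> 2 * t * inner v v + t^2 * (m * inner v v - inner v (A *v v))"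
  proof
    fix t :: real
    have "h + t *\<^sub>R v \<in> U" using hU vU U subspace_add subspace_scale by blast
    then have ineq: "inner (h + t *\<^sub>R v) (A *v (h + t *\<^sub>R v)) \<le> m * inner (h + t *\<^sub>R v) (h + t *\<^sub>R v)"
      using bound by blast
    have p1: "inner h (A *v v) = inner (A *v h) v" using sym by blast
    have vv0: "inner v v = inner v (m *\<^sub>R h) - inner v (A *v h)"
      by (metis v_def inner_diff_right)
    have vv: "inner v v = m * inner h v - inner (A *v h) v"
      using vv0 by (simp add: inner_commute)
    have mm: "inner h (A *v h) = m" unfolding m_def by simp
    have e1: "inner (h + t *\<^sub>R v) (A *v (h + t *\<^sub>R v)) = inner h (A *v h) + 2*t*inner (A *v h) v + t^2 * inner v (A *v v)"
      using p1 by (simp add: vec.add matrix_vector_mult_scaleR inner_add_left inner_add_right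
          power2_eq_square inner_commute[of v "A *v h"] algebra_simps)
    have e2: "inner (h + t *\<^sub>R v) (h + t *\<^sub>R v) = inner h h + 2*t*inner h v + t^2 * inner v v"
      by (simp add: inner_add_left inner_add_right power2_eq_square inner_commute[of v h] algebra_simps)
    have "2 * t * inner v v + t^2 * (m * inner v v - inner v (A *v v)) =
       m * inner (h + t *\<^sub>R v) (h + t *\<^sub>R v) - inner (h + t *\<^sub>R v) (A *v (h + t *\<^sub>R v))"
      unfolding e1 e2 mm hh by (simp add: vv algebra_simps)
    then show "0 \<le> 2 * t * inner v v + t^2 * (m * inner v v - inner v (A *v v))"
      using ineq by simp
  qed
  have "0 \<le> m * inner v v - inner v (A *v v)" using bound[OF vU] by simp
  then have "inner v v = 0" using lagrange_aux[OF _ _ Q] by simp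
  then have "A *v h = m *\<^sub>R h" unfolding v_def by simp
  moreover have "h \<noteq> 0" using hn by auto
  ultimately show ?thesis using hU bound by blast
qed

lemma rw_entry: "rw_matrix E d $ x $ y = (if E x y then 1 / real d else 0)"
  unfolding rw_matrix_def by simp

lemma rw_sym:
  assumes "regular_graph E d"
  shows "inner u (rw_matrix E d *v v) = inner (rw_matrix E d *v u) v"
proof -
  have s: "E x y = E y x" for x y using assms unfolding regular_graph_def by blast
  have "inner u (rw_matrix E d *v v) = (\<Sum>x\<in>UNIV. \<Sum>y\<in>UNIV. u $ x * (if E x y then 1 / real d else 0) * v $ y)"
    by (simp add: inner_vec_def matrix_vector_mult_def rw_entry sum_distrib_left mult.assoc)
  also have "\<dots> = (\<Sum>y\<in>UNIV. \<Sum>x\<in>UNIV. u $ x * (if E x y then 1 / real d else 0) * v $ y)"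
    by (rule sum.swap)
  also have "\<dots> = inner (rw_matrix E d *v u) v"
    by (simp add: inner_vec_def matrix_vector_mult_def rw_entry sum_distrib_left s mult_ac)
  finally show ?thesis .
qed

lemma rowsum:
  assumes "regular_graph E d"
  shows "(\<Sum>y\<in>UNIV. if E x y then 1 / real d else 0) = (1::real)"
proof -
  have "(\<Sum>y\<in>UNIV. if E x y then 1 / real d else 0) = (\<Sum>y\<in>{y. E x y}. 1 / real d :: real)"
    by (simp add: sum.If_cases)
  also have c: "card {y. E x y} = d" using assms unfolding regular_graph_def by blast
  have "(\<Sum>y\<in>{y. E x y}. 1 / real d :: real) = 1" using assms c unfolding regular_graph_def by simp
  finally show ?thesis .
qed

lemma rw_contract:
  assumes "regular_graph E d"
  shows "inner g (rw_matrix E d *v g) \<le> inner g g"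
proof -
  let ?a = "\<lambda>x y. (if E x y then 1 / real d else 0) :: real"
  have s: "E x y = E y x" for x y using assms unfolding regular_graph_def by blast
  have nn: "?a x y \<ge> 0" for x y by simp
  have "inner g (rw_matrix E d *v g) = (\<Sum>x\<in>UNIV. \<Sum>y\<in>UNIV. ?a x y * (g $ x * g $ y))"
    by (simp add: inner_vec_def matrix_vector_mult_def rw_entry sum_distrib_left mult_ac)
  also have "\<dots> \<le> (\<Sum>x\<in>UNIV. \<Sum>y\<in>UNIV. ?a x y * ((g $ x)^2 / 2 + (g $ y)^2 / 2))"
  proof (intro sum_mono mult_left_mono[OF _ nn])
    fix x y
    have "0 \<le> (g $ x - g $ y)^2" by simp
    then show "g $ x * g $ y \<le> (g $ x)^2 / 2 + (g $ y)^2 / 2" by (simp add: power2_eq_square algebra_simps)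
  qed
  also have "\<dots> = (\<Sum>x\<in>UNIV. (g $ x)^2 / 2 * (\<Sum>y\<in>UNIV. ?a x y)) + (\<Sum>x\<in>UNIV. \<Sum>y\<in>UNIV. ?a x y * (g $ y)^2 / 2)"
    by (simp add: distrib_left sum.distrib sum_distrib_left mult.commute mult.left_commute)
  also have "(\<Sum>x\<in>UNIV. \<Sum>y\<in>UNIV. ?a x y * (g $ y)^2 / 2) = (\<Sum>y\<in>UNIV. \<Sum>x\<in>UNIV. ?a x y * (g $ y)^2 / 2)"
    by (rule sum.swap)
  also have "\<dots> = (\<Sum>y\<in>UNIV. (g $ y)^2 / 2 * (\<Sum>x\<in>UNIV. ?a y x))"
    by (simp add: sum_distrib_left sum_divide_distrib s mult.commute)
  also have "(\<Sum>x\<in>UNIV. (g $ x)^2 / 2 * (\<Sum>y\<in>UNIV. ?a x y)) + (\<Sum>y\<in>UNIV. (g $ y)^2 / 2 * (\<Sum>x\<in>UNIV. ?a y x))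
      = inner g g"
    by (simp add: rowsum[OF assms] inner_vec_def power2_eq_square flip: sum.distrib)
  finally show ?thesis .
qed

lemma W_inv:
  fixes A :: "real^'n::finite^'n"
  assumes "w \<in> eig_span_ge A lam"
  shows "A *v w \<in> eig_span_ge A lam"
proof -
  let ?B = "{f. f \<noteq> 0 \<and> (\<exists>mu. mu \<ge> lam \<and> A *v f = mu *\<^sub>R f)}"
  have lin: "linear ((*v) A)" by (rule matrix_vector_mul_linear)
  have "(*v) A ` ?B \<subseteq> span ?B"
  proof
    fix y assume "y \<in> (*v) A ` ?B"
    then obtain f where f: "f \<in> ?B" "y = A *v f" by blast
    then obtain mu where mu: "A *v f = mu *\<^sub>R f" by blast
    have "f \<in> span ?B" using f(1) by (rule span_base)
    then have "mu *\<^sub>R f \<in> span ?B" by (rule span_scale)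
    then show "y \<in> span ?B" using f(2) mu by simp
  qed
  then have "span ((*v) A ` ?B) \<subseteq> span ?B" using span_mono span_span by blast
  then have "(*v) A ` span ?B \<subseteq> span ?B" using linear_span_image[OF lin] by simp
  then show ?thesis using assms unfolding eig_span_ge_def by blast
qed

lemma U_bound:
  fixes lam :: real
  assumes reg: "regular_graph E d"
  defines "W \<equiv> eig_span_ge (rw_matrix E d) lam"
  assumes uU: "\<forall>w\<in>W. inner u w = 0"
  shows "inner u (rw_matrix E d *v u) \<le> lam * inner u u"
proof -
  let ?A = "rw_matrix E d"
  define U where "U = {u. \<forall>w\<in>W. inner u w = 0}"
  have Wsub: "subspace W" unfolding W_def eig_span_ge_def by (rule subspace_span)
  have Usub: "subspace U" unfolding U_def subspace_def
    by (simp add: inner_add_left)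
  have inv: "?A *v x \<in> U" if "x \<in> U" for x
  proof -
    have "inner (?A *v x) w = 0" if "w \<in> W" for w
    proof -
      have "?A *v w \<in> W" using that W_inv unfolding W_def by blast
      then have "inner x (?A *v w) = 0" using \<open>x \<in> U\<close> unfolding U_def by blast
      then show ?thesis using rw_sym[OF reg, of x w] by simp
    qed
    then show ?thesis unfolding U_def by blast
  qed
  have u: "u \<in> U" using uU U_def by simp
  show ?thesis
  proof (cases "U = {0}")
    case True then show ?thesis using u by simp
  next
    case False
    obtain h m where h: "h \<in> U" "h \<noteq> 0" "?A *v h = m *\<^sub>R h"
      and b: "\<forall>x\<in>U. inner x (?A *v x) \<le> m * inner x x"
      using rayleigh[OF rw_sym[OF reg] Usub inv False] by blast
    have "m < lam"
    proof (rule ccontr)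
      assume "\<not> m < lam"
      then have "h \<in> W" unfolding W_def eig_span_ge_def using h by (intro span_base) auto
      then have "inner h h = 0" using h U_def by blast
      then show False using h by simp
    qed
    then have "m * inner u u \<le> lam * inner u u" by (intro mult_right_mono) auto
    then show ?thesis using b u by fastforce
  qed
qed

lemma pnorm2: "pnorm 2 (v::real^'n::finite) = sqrt (inner v v / real CARD('n))"
proof -
  have "\<bar>v $ x\<bar> powr 2 = (v $ x) * (v $ x)" for x
    by (simp add: power2_eq_square)
  then show ?thesis unfolding pnorm_def
    by (simp add: inner_vec_def powr_half_sqrt sum_nonneg)
qed

lemma pnorm_bound:
  fixes f :: "real^'n::finite"
  assumes p: "p \<ge> 1" and f: "pnorm p f \<le> 1"
  shows "inner f f \<le> real CARD('n) ^ 3"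
proof -
  let ?N = "real CARD('n)"
  have N: "?N \<ge> 1" by simp
  define T where "T = (\<Sum>x\<in>UNIV. \<bar>f $ x\<bar> powr p)"
  have T0: "T \<ge> 0" unfolding T_def by (simp add: sum_nonneg)
  have "T / ?N \<le> 1"
  proof (rule ccontr)
    assume "\<not> T / ?N \<le> 1"
    then have "1 < (T / ?N) powr (1 / p)" using p by (intro gr_one_powr) auto
    then show False using f unfolding pnorm_def T_def by simp
  qed
  then have TN: "T \<le> ?N" by (simp add: field_simps)
  have each: "\<bar>f $ x\<bar> \<le> ?N" for x
  proof (cases "\<bar>f $ x\<bar> \<le> 1")
    case True then show ?thesis using N by linarith
  next
    case False
    then have "\<bar>f $ x\<bar> powr 1 \<le> \<bar>f $ x\<bar> powr p" using p by (intro powr_mono) auto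
    also have "\<dots> \<le> T" unfolding T_def by (rule member_le_sum) auto
    finally show ?thesis using TN False by simp
  qed
  have "inner f f = (\<Sum>x\<in>UNIV. f $ x * f $ x)" by (simp add: inner_vec_def)
  also have "\<dots> \<le> (\<Sum>x\<in>(UNIV::'n set). ?N * ?N)"
  proof (rule sum_mono)
    fix x
    have "f $ x * f $ x = \<bar>f $ x\<bar> * \<bar>f $ x\<bar>" by (simp add: abs_mult[symmetric])
    also have "\<dots> \<le> ?N * ?N" using each[of x] by (intro mult_mono) auto
    finally show "f $ x * f $ x \<le> ?N * ?N" .
  qed
  also have "\<dots> = ?N ^ 3" by (simp add: power3_eq_cube)
  finally show ?thesis .
qed

lemma opnorm_upper:
  fixes W :: "(real^'n::finite) set"
  assumes W: "subspace W" and p: "p \<ge> 1" and f: "pnorm p f \<le> 1"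
  shows "pnorm 2 (orth_proj W f) \<le> opnorm_p2 p (orth_proj W)"
  unfolding opnorm_p2_def
proof (rule cSUP_upper)
  show "f \<in> {f. pnorm p f \<le> 1}" using f by simp
  let ?N = "real CARD('n)"
  have "pnorm 2 (orth_proj W g) \<le> sqrt (?N ^ 3 / ?N)" if "pnorm p g \<le> 1" for g
  proof -
    have "inner (orth_proj W g) (orth_proj W g) \<le> ?N ^ 3"
      using proj_norm[OF W, of g] pnorm_bound[OF p that] by linarith
    then show ?thesis unfolding pnorm2 by (intro real_sqrt_le_mono divide_right_mono) auto
  qed
  then show "bdd_above ((\<lambda>f. pnorm 2 (orth_proj W f)) ` {f. pnorm p f \<le> 1})"
    by (intro bdd_aboveI2) auto
qed

lemma card_split:
  assumes "regular_graph E d"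
  shows "real (card {y. E x y \<and> y \<notin> S}) = real d - real (card {y. E x y \<and> y \<in> S})"
proof -
  have c: "card {y. E x y} = d" using assms unfolding regular_graph_def by blast
  have "{y. E x y} = {y. E x y \<and> y \<in> S} \<union> {y. E x y \<and> y \<notin> S}" by auto
  then have "card {y. E x y} = card {y. E x y \<and> y \<in> S} + card {y. E x y \<and> y \<notin> S}"
    by (metis (no_types, lifting) card_Un_disjoint disjoint_iff finite mem_Collect_eq)
  then show ?thesis using c by simp
qed

lemma quad_indicator:
  fixes S :: "'n::finite set"
  defines "f \<equiv> (\<chi> x. if x \<in> S then 1 else 0) :: real^'n"
  shows "inner f (rw_matrix E d *v f) = (\<Sum>x\<in>S. real (card {y. E x y \<and> y \<in> S}) / real d)"
    and "inner f f = real (card S)"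
proof -
  have "inner f (rw_matrix E d *v f) = (\<Sum>x\<in>UNIV. if x \<in> S then (\<Sum>y\<in>UNIV. if E x y \<and> y \<in> S then 1 / real d else 0) else 0)"
    unfolding f_def by (auto simp: inner_vec_def matrix_vector_mult_def rw_entry intro!: sum.cong)
  also have "\<dots> = (\<Sum>x\<in>S. (\<Sum>y\<in>UNIV. if E x y \<and> y \<in> S then 1 / real d else 0))"
    by (simp add: sum.If_cases)
  also have "\<dots> = (\<Sum>x\<in>S. real (card {y. E x y \<and> y \<in> S}) / real d)"
    by (simp add: sum.If_cases)
  finally show "inner f (rw_matrix E d *v f) = (\<Sum>x\<in>S. real (card {y. E x y \<and> y \<in> S}) / real d)" .
  show "inner f f = real (card S)"
  proof -
    have "(\<Sum>i\<in>UNIV. (if i \<in> S then 1 else 0) * (if i \<in> S then 1 else 0) :: real) = (\<Sum>i\<in>UNIV. if i \<in> S then 1 else 0)"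
      by (intro sum.cong) auto
    then show ?thesis by (simp add: f_def inner_vec_def sum.If_cases)
  qed
qed

theorem lemmaD4:
  fixes E :: "'n::finite \<Rightarrow> 'n \<Rightarrow> bool" and d :: nat
    and lam q :: real and S :: "'n set"
  assumes "regular_graph E d"
    and "0 < lam" and "lam < 1"
    and "q \<ge> 2"
    and "S \<noteq> {}"
  shows "expansion E d S \<ge> 1 - lam
           - (opnorm_p2 (q / (q - 1)) (orth_proj (eig_span_ge (rw_matrix E d) lam)))\<^sup>2
             * meas S powr ((q - 2) / q)"
proof -
  note reg = assms(1)
  define A where "A = rw_matrix E d"
  define W where "W = eig_span_ge A lam"
  define opn where "opn = opnorm_p2 (q / (q - 1)) (orth_proj W)"
  define f where "f = ((\<chi> x. if x \<in> S then 1 else 0) :: real^'n)"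
  define g where "g = orth_proj W f"
  define h where "h = f - g"
  define N where "N = real CARD('n)"
  define s where "s = real (card S)"
  define \<mu> where "\<mu> = meas S"
  have d0: "d > 0" using reg unfolding regular_graph_def by blast
  have s0: "s > 0" unfolding s_def using assms(5) by (simp add: card_gt_0_iff)
  have N0: "N > 0" unfolding N_def by simp
  have mu: "\<mu> = s / N" unfolding \<mu>_def meas_def s_def N_def by simp
  have mu0: "\<mu> > 0" using mu s0 N0 by simp
  have Wsub: "subspace W" unfolding W_def eig_span_ge_def by (rule subspace_span)
  have gW: "g \<in> W" and hperp: "\<forall>w\<in>W. inner h w = 0"
    using proj_props[OF Wsub, of f] unfolding g_def h_def by auto
  have AgW: "A *v g \<in> W" using gW W_inv unfolding W_def by blast
  have fgh: "f = g + h" unfolding h_def by simp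
  have hAg: "inner h (A *v g) = 0" using hperp AgW by blast
  have gAh: "inner g (A *v h) = 0" using hAg rw_sym[OF reg, of g h] unfolding A_def
    by (simp add: inner_commute)
  have hg: "inner h g = 0" using hperp gW by blast
  have fAf: "inner f (A *v f) = inner g (A *v g) + inner h (A *v h)"
    unfolding fgh using hAg gAh by (simp add: vec.add inner_add_left inner_add_right)
  have ff: "inner f f = inner g g + inner h h"
    unfolding fgh using hg by (simp add: inner_add_left inner_add_right inner_commute)
  have b1: "inner g (A *v g) \<le> inner g g" unfolding A_def by (rule rw_contract[OF reg])
  have b2: "inner h (A *v h) \<le> lam * inner h h"
    using U_bound[OF reg, of lam h] hperp unfolding A_def W_def by blast
  have ffs: "inner f f = s" using quad_indicator(2)[of S] unfolding f_def s_def by simp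
  have "lam * inner h h \<le> lam * s" using ff ffs assms(2) by (intro mult_left_mono) auto
  then have fAf_le: "inner f (A *v f) \<le> inner g g + lam * s"
    using fAf b1 b2 by linarith
  have exp_eq: "expansion E d S = 1 - inner f (A *v f) / s"
  proof -
    have "expansion E d S = (\<Sum>x\<in>S. 1 - real (card {y. E x y \<and> y \<in> S}) / real d) / s"
      unfolding expansion_def s_def using d0 by (simp add: card_split[OF reg] diff_divide_distrib)
    also have "\<dots> = (s - inner f (A *v f)) / s"
      unfolding A_def f_def quad_indicator(1) s_def by (simp add: sum_subtractf)
    also have "\<dots> = 1 - inner f (A *v f) / s" using s0 by (simp add: field_simps)
    finally show ?thesis .
  qed
  have gg: "inner g g \<le> s * (opn\<^sup>2 * \<mu> powr ((q - 2) / q))"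
  proof -
    define p where "p = q / (q - 1)"
    have q1: "q - 1 > 0" using assms(4) by simp
    have p1: "p \<ge> 1" unfolding p_def using q1 by simp
    have ip: "1 / p = (q - 1) / q" unfolding p_def using q1 by simp
    define c where "c = \<mu> powr ((q - 1) / q)"
    have c0: "c > 0" unfolding c_def using mu0 by simp
    have cp: "c powr p = \<mu>" unfolding c_def p_def using q1 assms(4) mu0
      by (simp add: powr_powr)
    define f' where "f' = (1 / c) *\<^sub>R f"
    have "(\<Sum>x\<in>UNIV. \<bar>f' $ x\<bar> powr p) = (\<Sum>x\<in>UNIV. if x \<in> S then (1 / c) powr p else 0)"
      unfolding f'_def f_def using c0 by (intro sum.cong) auto
    also have "\<dots> = s * (1 / c) powr p" unfolding s_def by (simp add: sum.If_cases)
    also have "(1 / c) powr p = 1 / \<mu>" using c0 cp by (simp add: powr_divide)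
    finally have "(\<Sum>x\<in>UNIV. \<bar>f' $ x\<bar> powr p) / N = 1"
      using mu s0 N0 by (simp add: field_simps)
    then have pf': "pnorm p f' \<le> 1" unfolding pnorm_def N_def by simp
    have "pnorm 2 (orth_proj W f') \<le> opn"
      unfolding opn_def p_def[symmetric] by (rule opnorm_upper[OF Wsub p1 pf'])
    moreover have "orth_proj W f' = (1 / c) *\<^sub>R g"
      unfolding f'_def g_def by (rule proj_scale[OF Wsub])
    ultimately have "sqrt (inner g g / c^2 / N) \<le> opn"
      unfolding pnorm2 N_def using c0 by (simp add: power2_eq_square)
    then have "inner g g / c^2 / N \<le> opn^2"
      by (metis real_le_rsqrt real_sqrt_le_iff sqrt_le_D)
    then have g1: "inner g g \<le> opn^2 * c^2 * N" using c0 N0 by (simp add: field_simps)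
    have c2: "c^2 * N = s * \<mu> powr ((q - 2) / q)"
    proof -
      have "c^2 = \<mu> powr ((q - 1) / q + (q - 1) / q)" unfolding c_def power2_eq_square
        by (simp only: powr_add)
      also have "(q - 1) / q + (q - 1) / q = 2 * ((q - 1) / q)" by simp
      also have "2 * ((q - 1) / q) = (q - 2) / q + 1" using assms(4) by (simp add: field_simps)
      also have "\<mu> powr ((q - 2) / q + 1) = \<mu> powr ((q - 2) / q) * \<mu>" using mu0 by (simp add: powr_add)
      finally have "c^2 = \<mu> powr ((q - 2) / q) * \<mu>" .
      moreover have "\<mu> * N = s" using mu N0 by simp
      ultimately show ?thesis by (metis mult.assoc mult.commute)
    qed
    show ?thesis using g1 c2 by (simp add: mult.assoc mult.left_commute)
  qed
  have fa: "inner f (A *v f) / s \<le> inner g g / s + lam" using fAf_le s0 by (simp add: field_simps)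
  have fb: "inner g g / s \<le> opn\<^sup>2 * \<mu> powr ((q - 2) / q)" using gg s0 by (simp add: field_simps)
  have fin: "inner f (A *v f) / s \<le> opn\<^sup>2 * \<mu> powr ((q - 2) / q) + lam" using fa fb by linarith
  show ?thesis using exp_eq fin unfolding opn_def W_def A_def \<mu>_def by linarith
qed

end
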